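(* Let $\alpha$ be an ordinal and let $\mathcal{X},\mathcal{Y}$ be families of metric spaces with $\mathcal{X},\mathcal{Y}\in\mathfrak{C}_\alpha$. Then $\mathcal{X}\otimes\mathcal{Y}\in\mathfrak{C}_\alpha$.
   Context: $\mathcal{X}\otimes\mathcal{Y}=\{X\times Y\colon X\in\mathcal{X},Y\in\mathcal{Y}\}$, where $X\times Y$ carries the metric $d((x,y),(x',y'))=\sqrt{d_X(x,x')^2+d_Y(y,y')^2}$. A family $\mathcal{U}$ of metric subspaces of a metric space $(X,d)$ is $r$-disjoint if $d(x,y)>r$ whenever $x\in U$, $y\in U'$, $U\neq U'$ in $\mathcal{U}$. For families $\mathcal{X},\mathcal{Y}$ and $R\in\mathbb{R}^{\mathbb{N}}$, $\mathcal{X}\xrightarrow{R}\mathcal{Y}$ means: there is an integer $k$ such that for each $X\in\mathcal{X}$ there are subcollections $\mathcal{U}_1,\dots,\mathcal{U}_k\subseteq\mathcal{Y}$ of subspaces of $X$, each $\mathcal{U}_i$ being $R_i$-disjoint, with $\bigcup_i\mathcal{U}_i$ covering $X$. A family is bounded if the diameters of its members are uniformly bounded. $\mathfrak{C}_0$ is the class of bounded families; for an ordinal $\alpha>0$, $\mathfrak{C}_\alpha$ is the class of families $\mathcal{X}$ such that for every $R\in\mathbb{R}^{\mathbb{N}}$ there exist $\beta<\alpha$ and $\mathcal{Y}\in\mathfrak{C}_\beta$ with $\mathcal{X}\xrightarrow{R}\mathcal{Y}$. *)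

theory Defs
  imports "HOL-Analysis.Analysis"
begin

text \<open>A metric space is an element of the library type 'a metric; a family of
metric spaces is a set of them.  Ordinals are elements of an arbitrary
well-ordered type.\<close>

definition metric_tensor :: "'a metric set \<Rightarrow> 'b metric set \<Rightarrow> ('a \<times> 'b) metric set" where
  "metric_tensor XX YY = {prod_metric X Y | X Y. X \<in> XX \<and> Y \<in> YY}"

definition is_subspace :: "'a metric \<Rightarrow> 'a metric \<Rightarrow> bool" where
  "is_subspace U X \<longleftrightarrow> mspace U \<subseteq> mspace X \<and> U = submetric X (mspace U)"

definition r_disjoint :: "real \<Rightarrow> 'a metric \<Rightarrow> 'a metric set \<Rightarrow> bool" where
  "r_disjoint r X UU \<longleftrightarrow>
     (\<forall>U\<in>UU. \<forall>U'\<in>UU. U \<noteq> U' \<longrightarrow>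
        (\<forall>x\<in>mspace U. \<forall>y\<in>mspace U'. mdist X x y > r))"

definition bounded_family :: "'a metric set \<Rightarrow> bool" where
  "bounded_family XX \<longleftrightarrow>
     (\<exists>B::real. \<forall>X\<in>XX. \<forall>x\<in>mspace X. \<forall>y\<in>mspace X. mdist X x y \<le> B)"

text \<open>XX --R--> YY; the sequence R is indexed by the positive naturals (R 0 unused).\<close>
definition fam_arrow :: "(nat \<Rightarrow> real) \<Rightarrow> 'a metric set \<Rightarrow> 'a metric set \<Rightarrow> bool" where
  "fam_arrow R XX YY \<longleftrightarrow>
     (\<exists>k::nat. \<forall>X\<in>XX. \<exists>UU::nat \<Rightarrow> 'a metric set.
        (\<forall>i\<in>{1..k}. UU i \<subseteq> YY \<and> (\<forall>U\<in>UU i. is_subspace U X) \<and> r_disjoint (R i) X (UU i))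
        \<and> mspace X \<subseteq> (\<Union>i\<in>{1..k}. \<Union>U\<in>UU i. mspace U))"

inductive inC :: "'o::wellorder \<Rightarrow> 'a metric set \<Rightarrow> bool" where
  zero: "(\<forall>\<beta>. \<not> \<beta> < \<alpha>) \<Longrightarrow> bounded_family XX \<Longrightarrow> inC \<alpha> XX"
| pos: "(\<exists>\<beta>. \<beta> < \<alpha>) \<Longrightarrow> (\<forall>R. \<exists>\<beta><\<alpha>. \<exists>YY. inC \<beta> YY \<and> fam_arrow R XX YY) \<Longrightarrow> inC \<alpha> XX"

end

theory Submission
  imports Defs
begin

definition arrowk :: "(nat \<Rightarrow> real) \<Rightarrow> nat \<Rightarrow> 'a metric set \<Rightarrow> 'a metric set \<Rightarrow> bool" where
  "arrowk R k XX YY \<longleftrightarrow> (\<forall>X\<in>XX. \<exists>UU::nat \<Rightarrow> 'a metric set.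
        (\<forall>i\<in>{1..k}. UU i \<subseteq> YY \<and> (\<forall>U\<in>UU i. is_subspace U X) \<and> r_disjoint (R i) X (UU i))
        \<and> mspace X \<subseteq> (\<Union>i\<in>{1..k}. \<Union>U\<in>UU i. mspace U))"

lemma fam_arrow_iff: "fam_arrow R XX YY \<longleftrightarrow> (\<exists>k. arrowk R k XX YY)"
  by (simp add: fam_arrow_def arrowk_def)

lemma arrowkE:
  assumes "arrowk R k XX YY" "X \<in> XX"
  obtains UU where "\<forall>i\<in>{1..k}. UU i \<subseteq> YY \<and> (\<forall>U\<in>UU i. is_subspace U X) \<and> r_disjoint (R i) X (UU i)"
    "mspace X \<subseteq> (\<Union>i\<in>{1..k}. \<Union>U\<in>UU i. mspace U)"
proof -
  from bspec[OF assms(1)[unfolded arrowk_def] assms(2)] obtain UU where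
    h: "(\<forall>i\<in>{1..k}. UU i \<subseteq> YY \<and> (\<forall>U\<in>UU i. is_subspace U X) \<and> r_disjoint (R i) X (UU i))
    \<and> mspace X \<subseteq> (\<Union>i\<in>{1..k}. \<Union>U\<in>UU i. mspace U)" by (elim exE)
  show ?thesis by (rule that[OF conjunct1[OF h] conjunct2[OF h]])
qed

lemma arrowkI:
  assumes "\<And>X. X \<in> XX \<Longrightarrow> \<exists>UU. (\<forall>i\<in>{1..k}. UU i \<subseteq> YY \<and> (\<forall>U\<in>UU i. is_subspace U X) \<and> r_disjoint (R i) X (UU i))
    \<and> mspace X \<subseteq> (\<Union>i\<in>{1..k}. \<Union>U\<in>UU i. mspace U)"
  shows "arrowk R k XX YY"
  unfolding arrowk_def using assms by (intro ballI)

lemma arrowk_fam: "arrowk R k XX YY \<Longrightarrow> fam_arrow R XX YY"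
  unfolding fam_arrow_iff by (rule exI)

lemma fam_arrowE: assumes "fam_arrow R XX YY" obtains k where "arrowk R k XX YY"
  using assms unfolding fam_arrow_iff by (elim exE)

lemma is_subspace_refl: "is_subspace X X"
  by (simp add: is_subspace_def)

lemma r_disjoint_single: "r_disjoint r X {U}"
  by (simp add: r_disjoint_def)

lemma r_disjoint_empty: "r_disjoint r X {}"
  by (simp add: r_disjoint_def)

lemma bot_exists: obtains b :: "'o::wellorder" where "\<forall>\<beta>. \<not> \<beta> < b"
  using not_less_Least[of _ "\<lambda>_. True"] by blast

lemma inC_mono: assumes "inC \<beta> XX" "\<beta> \<le> \<gamma>" shows "inC \<gamma> XX"
proof (cases "\<beta> = \<gamma>")
  case True then show ?thesis using assms by simp
next
  case False
  then have lt: "\<beta> < \<gamma>" using assms(2) by simp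
  show ?thesis
  proof (rule inC.pos)
    show "\<exists>\<beta>. \<beta> < \<gamma>" using lt by blast
    show "\<forall>R. \<exists>\<beta>'<\<gamma>. \<exists>YY. inC \<beta>' YY \<and> fam_arrow R XX YY"
    proof
      fix R :: "nat \<Rightarrow> real"
      from assms(1) show "\<exists>\<beta>'<\<gamma>. \<exists>YY. inC \<beta>' YY \<and> fam_arrow R XX YY"
      proof cases
        case zero
        have "arrowk R 1 XX XX"
        proof (rule arrowkI)
          fix X assume "X \<in> XX"
          show "\<exists>UU::nat \<Rightarrow> _.
            (\<forall>i\<in>{1..1}. UU i \<subseteq> XX \<and> (\<forall>U\<in>UU i. is_subspace U X) \<and> r_disjoint (R i) X (UU i))
            \<and> mspace X \<subseteq> (\<Union>i\<in>{1..1}. \<Union>U\<in>UU i. mspace U)"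
            by (rule exI[of _ "\<lambda>_. {X}"]) (simp add: is_subspace_refl r_disjoint_single \<open>X \<in> XX\<close>)
        qed
        then have "fam_arrow R XX XX" by (rule arrowk_fam)
        then show ?thesis using assms(1) lt by blast
      next
        case pos
        then obtain \<beta>' YY where "\<beta>' < \<beta>" "inC \<beta>' YY" "fam_arrow R XX YY" by blast
        then show ?thesis using lt by (meson less_trans)
      qed
    qed
  qed
qed

lemma inC_empty: "inC \<gamma> {}"
proof -
  obtain b :: 'a where b: "\<forall>\<beta>. \<not> \<beta> < b" by (rule bot_exists)
  have "inC b {}" by (rule inC.zero) (use b in \<open>auto simp: bounded_family_def\<close>)
  moreover have "b \<le> \<gamma>" using b by (meson not_less)
  ultimately show ?thesis by (rule inC_mono)
qed

lemma arrowk_mono: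
  assumes "arrowk R k XX YY" "k \<le> k'" "YY \<subseteq> YY'"
  shows "arrowk R k' XX YY'"
proof (rule arrowkI)
  fix X assume "X \<in> XX"
  with assms(1) obtain UU where UU: "\<forall>i\<in>{1..k}. UU i \<subseteq> YY \<and> (\<forall>U\<in>UU i. is_subspace U X) \<and> r_disjoint (R i) X (UU i)"
    "mspace X \<subseteq> (\<Union>i\<in>{1..k}. \<Union>U\<in>UU i. mspace U)"
    by (rule arrowkE)
  define V where "V i = (if i \<le> k then UU i else {})" for i
  have 1: "\<forall>i\<in>{1..k'}. V i \<subseteq> YY' \<and> (\<forall>U\<in>V i. is_subspace U X) \<and> r_disjoint (R i) X (V i)"
  proof
    fix i assume i: "i \<in> {1..k'}"
    show "V i \<subseteq> YY' \<and> (\<forall>U\<in>V i. is_subspace U X) \<and> r_disjoint (R i) X (V i)"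
    proof (cases "i \<le> k")
      case True
      then have "i \<in> {1..k}" using i by simp
      with UU(1) have "UU i \<subseteq> YY \<and> (\<forall>U\<in>UU i. is_subspace U X) \<and> r_disjoint (R i) X (UU i)" by (rule bspec)
      then show ?thesis using assms(3) True unfolding V_def by auto
    next
      case False
      then show ?thesis unfolding V_def by (simp add: r_disjoint_empty)
    qed
  qed
  have 2: "mspace X \<subseteq> (\<Union>i\<in>{1..k'}. \<Union>U\<in>V i. mspace U)"
  proof
    fix x assume "x \<in> mspace X"
    then have "x \<in> (\<Union>i\<in>{1..k}. \<Union>U\<in>UU i. mspace U)" using UU(2) by (rule subsetD[rotated])
    then obtain i U where iU: "i \<in> {1..k}" "U \<in> UU i" "x \<in> mspace U" by (elim UN_E)
    then have "i \<in> {1..k'}" "U \<in> V i" using assms(2) unfolding V_def by auto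
    then show "x \<in> (\<Union>i\<in>{1..k'}. \<Union>U\<in>V i. mspace U)" using iU(3) by (intro UN_I)
  qed
  show "\<exists>UU. (\<forall>i\<in>{1..k'}. UU i \<subseteq> YY' \<and> (\<forall>U\<in>UU i. is_subspace U X) \<and> r_disjoint (R i) X (UU i))
        \<and> mspace X \<subseteq> (\<Union>i\<in>{1..k'}. \<Union>U\<in>UU i. mspace U)"
    by (rule exI[of _ V], rule conjI[OF 1 2])
qed

lemma arrowk_Un: "arrowk R k A Z \<Longrightarrow> arrowk R k B Z \<Longrightarrow> arrowk R k (A \<union> B) Z"
  unfolding arrowk_def by (rule ball_Un[THEN iffD2, OF conjI])

lemma inC_posD: "inC \<gamma> A \<Longrightarrow> \<exists>\<beta>. \<beta> < \<gamma> \<Longrightarrow> \<forall>R. \<exists>\<beta><\<gamma>. \<exists>YY. inC \<beta> YY \<and> fam_arrow R A YY"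
  by (cases rule: inC.cases) auto

lemma inC_zeroD: "inC \<gamma> A \<Longrightarrow> \<not> (\<exists>\<beta>. \<beta> < \<gamma>) \<Longrightarrow> bounded_family A"
  by (cases rule: inC.cases) auto

lemma inC_Un: "inC \<gamma> A \<Longrightarrow> inC \<gamma> B \<Longrightarrow> inC \<gamma> (A \<union> B)"
proof (induction \<gamma> arbitrary: A B rule: less_induct)
  case (less \<gamma>)
  show ?case
  proof (cases "\<exists>\<beta>. \<beta> < \<gamma>")
    case False
    have bA: "bounded_family A" using less.prems(1) False by (cases rule: inC.cases) auto
    have bB: "bounded_family B" using less.prems(2) False by (cases rule: inC.cases) auto
    obtain B1 where B1: "\<forall>X\<in>A. \<forall>x\<in>mspace X. \<forall>y\<in>mspace X. mdist X x y \<le> B1"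
      using bA unfolding bounded_family_def by blast
    obtain B2 where B2: "\<forall>X\<in>B. \<forall>x\<in>mspace X. \<forall>y\<in>mspace X. mdist X x y \<le> B2"
      using bB unfolding bounded_family_def by blast
    have "bounded_family (A \<union> B)"
      unfolding bounded_family_def
      by (rule exI[of _ "max B1 B2"]) (use B1 B2 in \<open>fastforce\<close>)
    then show ?thesis using False by (intro inC.zero) auto
  next
    case True
    show ?thesis
    proof (rule inC.pos[OF True], rule allI)
      fix R :: "nat \<Rightarrow> real"
      obtain \<beta>1 A' where a: "\<beta>1 < \<gamma>" "inC \<beta>1 A'" "fam_arrow R A A'"
        using inC_posD[OF less.prems(1) True] by blast
      obtain \<beta>2 B' where b: "\<beta>2 < \<gamma>" "inC \<beta>2 B'" "fam_arrow R B B'"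
        using inC_posD[OF less.prems(2) True] by blast
      let ?b = "max \<beta>1 \<beta>2"
      have "inC ?b A'" using a(2) by (rule inC_mono) simp
      moreover have "inC ?b B'" using b(2) by (rule inC_mono) simp
      moreover have "?b < \<gamma>" using a(1) b(1) by simp
      ultimately have u: "inC ?b (A' \<union> B')" using less.IH by blast
      obtain k1 where k1: "arrowk R k1 A A'" using a(3) by (rule fam_arrowE)
      obtain k2 where k2: "arrowk R k2 B B'" using b(3) by (rule fam_arrowE)
      have "arrowk R (max k1 k2) A (A' \<union> B')" using k1 by (rule arrowk_mono) auto
      moreover have "arrowk R (max k1 k2) B (A' \<union> B')" using k2 by (rule arrowk_mono) auto
      ultimately have "fam_arrow R (A \<union> B) (A' \<union> B')" by (intro arrowk_fam arrowk_Un)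
      then show "\<exists>\<beta><\<gamma>. \<exists>YY. inC \<beta> YY \<and> fam_arrow R (A \<union> B) YY"
        using u \<open>?b < \<gamma>\<close> by blast
    qed
  qed
qed

lemma inC_UN: "finite I \<Longrightarrow> (\<forall>i\<in>I. inC \<gamma> (F i)) \<Longrightarrow> inC \<gamma> (\<Union>i\<in>I. F i)"
  by (induction I rule: finite_induct) (auto simp: inC_empty inC_Un)

lemma bounded_tensor:
  assumes "bounded_family XX" "bounded_family YY"
  shows "bounded_family (metric_tensor XX YY)"
proof -
  obtain B1 where B1: "\<forall>X\<in>XX. \<forall>x\<in>mspace X. \<forall>y\<in>mspace X. mdist X x y \<le> B1"
    using assms(1) unfolding bounded_family_def by blast
  obtain B2 where B2: "\<forall>X\<in>YY. \<forall>x\<in>mspace X. \<forall>y\<in>mspace X. mdist X x y \<le> B2"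
    using assms(2) unfolding bounded_family_def by blast
  have "\<forall>Z\<in>metric_tensor XX YY. \<forall>p\<in>mspace Z. \<forall>q\<in>mspace Z. mdist Z p q \<le> B1 + B2"
  proof (intro ballI)
    fix Z p q assume Z: "Z \<in> metric_tensor XX YY" and p: "p \<in> mspace Z" and q: "q \<in> mspace Z"
    obtain X Y where XY: "Z = prod_metric X Y" "X \<in> XX" "Y \<in> YY"
      using Z unfolding metric_tensor_def by blast
    obtain x y x' y' where pq: "p = (x,y)" "q = (x',y')" by (cases p, cases q) auto
    have m: "x \<in> mspace X" "x' \<in> mspace X" "y \<in> mspace Y" "y' \<in> mspace Y"
      using p q XY pq by auto
    have "mdist Z p q = sqrt ((mdist X x x')\<^sup>2 + (mdist Y y y')\<^sup>2)"
      using XY pq by (simp add: prod_dist_def)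
    also have "\<dots> \<le> mdist X x x' + mdist Y y y'"
      by (rule sqrt_sum_squares_le_sum) auto
    also have "\<dots> \<le> B1 + B2" using B1 B2 XY m by (meson add_mono)
    finally show "mdist Z p q \<le> B1 + B2" .
  qed
  then show ?thesis unfolding bounded_family_def by blast
qed

lemma subspace_prod:
  assumes "is_subspace U X" "is_subspace V Y"
  shows "is_subspace (prod_metric U V) (prod_metric X Y)"
proof -
  have "prod_metric U V = prod_metric (submetric X (mspace U)) (submetric Y (mspace V))"
    using assms unfolding is_subspace_def by metis
  also have "\<dots> = submetric (prod_metric X Y) (mspace U \<times> mspace V)"
    by (simp add: submetric_prod_metric)
  finally have e1: "prod_metric U V = submetric (prod_metric X Y) (mspace U \<times> mspace V)" .
  have "mspace U \<times> mspace V \<inter> mspace X \<times> mspace Y = mspace U \<times> mspace V"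
    using assms unfolding is_subspace_def by auto
  then show ?thesis using assms e1 unfolding is_subspace_def by auto
qed

lemma arrowk_blocks:
  assumes "\<forall>X\<in>XX. \<exists>F. (\<forall>t\<in>I. F t \<subseteq> ZZ \<and> (\<forall>U\<in>F t. is_subspace U X) \<and> r_disjoint (R (g t)) X (F t))
              \<and> mspace X \<subseteq> (\<Union>t\<in>I. \<Union>U\<in>F t. mspace U)"
    and "inj_on g I" and "g ` I \<subseteq> {1..K}"
  shows "arrowk R K XX ZZ"
proof (rule arrowkI)
  fix X assume "X \<in> XX"
  from bspec[OF assms(1) this] obtain F where F0: "(\<forall>t\<in>I. F t \<subseteq> ZZ \<and> (\<forall>U\<in>F t. is_subspace U X) \<and> r_disjoint (R (g t)) X (F t))
     \<and> mspace X \<subseteq> (\<Union>t\<in>I. \<Union>U\<in>F t. mspace U)" by (elim exE)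
  note F = conjunct1[OF F0] conjunct2[OF F0]
  define UU where "UU n = (if n \<in> g ` I then F (the_inv_into I g n) else {})" for n
  have UUg: "UU (g t) = F t" if "t \<in> I" for t
    using that assms(2) by (simp add: UU_def the_inv_into_f_f)
  have 1: "\<forall>i\<in>{1..K}. UU i \<subseteq> ZZ \<and> (\<forall>U\<in>UU i. is_subspace U X) \<and> r_disjoint (R i) X (UU i)"
  proof
    fix i assume "i \<in> {1..K}"
    show "UU i \<subseteq> ZZ \<and> (\<forall>U\<in>UU i. is_subspace U X) \<and> r_disjoint (R i) X (UU i)"
    proof (cases "i \<in> g ` I")
      case True
      then obtain t where t: "t \<in> I" "i = g t" by (elim imageE)
      have "F t \<subseteq> ZZ \<and> (\<forall>U\<in>F t. is_subspace U X) \<and> r_disjoint (R (g t)) X (F t)"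
        using F(1) t(1) by (rule bspec)
      then show ?thesis using UUg[OF t(1)] t(2) by simp
    next
      case False
      then show ?thesis by (simp add: UU_def r_disjoint_empty)
    qed
  qed
  have 2: "mspace X \<subseteq> (\<Union>i\<in>{1..K}. \<Union>U\<in>UU i. mspace U)"
  proof
    fix x assume "x \<in> mspace X"
    then have "x \<in> (\<Union>t\<in>I. \<Union>U\<in>F t. mspace U)" using F(2) by (rule subsetD[rotated])
    then obtain t U where tU: "t \<in> I" "U \<in> F t" "x \<in> mspace U" by (elim UN_E)
    have "g t \<in> {1..K}" using assms(3) tU(1) by blast
    moreover have "U \<in> UU (g t)" using UUg[OF tU(1)] tU(2) by simp
    ultimately show "x \<in> (\<Union>i\<in>{1..K}. \<Union>U\<in>UU i. mspace U)" using tU(3) by (intro UN_I)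
  qed
  show "\<exists>UU. (\<forall>i\<in>{1..K}. UU i \<subseteq> ZZ \<and> (\<forall>U\<in>UU i. is_subspace U X) \<and> r_disjoint (R i) X (UU i))
        \<and> mspace X \<subseteq> (\<Union>i\<in>{1..K}. \<Union>U\<in>UU i. mspace U)"
    by (rule exI[of _ UU], rule conjI[OF 1 2])
qed

theorem mainTheorem10:
  fixes \<alpha> :: "'o::wellorder"
    and XX :: "'a metric set" and YY :: "'b metric set"
  assumes "inC \<alpha> XX" and "inC \<alpha> YY"
  shows "inC \<alpha> (metric_tensor XX YY)"
proof -
  have main: "\<forall>XX::'a metric set. \<forall>YY::'b metric set. inC \<alpha> XX \<longrightarrow> inC \<alpha> YY \<longrightarrow> inC \<alpha> (metric_tensor XX YY)"
  proof (induction \<alpha> rule: less_induct)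
    case (less \<alpha>)
    show ?case
    proof (intro allI impI)
      fix XX :: "'a metric set" and YY :: "'b metric set"
      assume hX: "inC \<alpha> XX" and hY: "inC \<alpha> YY"
      show "inC \<alpha> (metric_tensor XX YY)"
      proof (cases "\<exists>\<beta>. \<beta> < \<alpha>")
        case False
        then show ?thesis using inC_zeroD[OF hX False] inC_zeroD[OF hY False] bounded_tensor
          by (intro inC.zero) auto
      next
        case True
        have hXR: "\<forall>R. \<exists>\<beta><\<alpha>. \<exists>YY. inC \<beta> YY \<and> fam_arrow R XX YY" using inC_posD[OF hX True] .
        have hYR: "\<forall>R. \<exists>\<beta><\<alpha>. \<exists>ZZ. inC \<beta> ZZ \<and> fam_arrow R YY ZZ" using inC_posD[OF hY True] .
        have "\<forall>S. \<exists>b Z k. b < \<alpha> \<and> inC b Z \<and> arrowk S k YY Z"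
        proof
          fix S
          obtain b Z where bZ: "b < \<alpha>" "inC b Z" "fam_arrow S YY Z" using hYR by blast
          obtain k where "arrowk S k YY Z" using bZ(3) by (rule fam_arrowE)
          then show "\<exists>b Z k. b < \<alpha> \<and> inC b Z \<and> arrowk S k YY Z" using bZ by blast
        qed
        then obtain bY YC kY where Ych: "\<And>S. bY S < \<alpha> \<and> inC (bY S) (YC S) \<and> arrowk S (kY S) YY (YC S)"
          by metis
        show ?thesis
        proof (rule inC.pos[OF True], rule allI)
          fix R :: "nat \<Rightarrow> real"
          define P where "P = rec_nat 0 (\<lambda>i p. p + kY (\<lambda>n. R (p + n)))"
          have PSuc: "P (Suc i) = P i + kY (\<lambda>n. R (P i + n))" for i by (simp add: P_def)
          define S where "S i = (\<lambda>n. R (P (i - 1) + n))" for i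
          have PS: "P i = P (i - 1) + kY (S i)" if "1 \<le> i" for i
            using that PSuc[of "i - 1"] by (simp add: S_def)
          have Pmono: "P i \<le> P j" if "i \<le> j" for i j
            by (rule lift_Suc_mono_le[of P, OF _ that]) (simp add: PSuc)
          define R' where "R' i = (\<Sum>n\<in>{P (i - 1) + 1 .. P i}. \<bar>R n\<bar>)" for i
          have R'ge: "R (P (i - 1) + j) \<le> R' i" if "1 \<le> i" "1 \<le> j" "j \<le> kY (S i)" for i j
          proof -
            have "P (i - 1) + j \<in> {P (i - 1) + 1 .. P i}" using that PS[OF that(1)] by auto
            then have "\<bar>R (P (i - 1) + j)\<bar> \<le> R' i" unfolding R'_def
              by (rule member_le_sum[where f="\<lambda>n. \<bar>R n\<bar>"]) auto
            then show ?thesis by linarith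
          qed
          obtain \<beta>X XX' where bX: "\<beta>X < \<alpha>" "inC \<beta>X XX'" "fam_arrow R' XX XX'" using hXR by blast
          obtain kX where kX: "arrowk R' kX XX XX'" using bX(3) by (rule fam_arrowE)
          define Bs where "Bs = insert \<beta>X ((\<lambda>i. bY (S i)) ` {1..kX})"
          define \<gamma> where "\<gamma> = Max Bs"
          have finBs: "finite Bs" "Bs \<noteq> {}" by (auto simp: Bs_def)
          have gl: "\<gamma> < \<alpha>" using Max_in[OF finBs] Ych bX(1) unfolding \<gamma>_def Bs_def by auto
          define YYs where "YYs = (\<Union>i\<in>{1..kX}. YC (S i))"
          have "\<beta>X \<le> \<gamma>" using finBs(1) unfolding \<gamma>_def by (intro Max_ge) (auto simp: Bs_def)
          with bX(2) have iX: "inC \<gamma> XX'" by (rule inC_mono)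
          have iY: "inC \<gamma> YYs" unfolding YYs_def
          proof (rule inC_UN)
            show "\<forall>i\<in>{1..kX}. inC \<gamma> (YC (S i))"
            proof
              fix i assume i: "i \<in> {1..kX}"
              have "bY (S i) \<le> \<gamma>" unfolding \<gamma>_def using finBs(1) i by (intro Max_ge) (auto simp: Bs_def)
              then show "inC \<gamma> (YC (S i))" using Ych by (meson inC_mono)
            qed
          qed simp
          have tens: "inC \<gamma> (metric_tensor XX' YYs)" using less.IH[OF gl] iX iY by blast
          define I where "I = {(i, j). 1 \<le> i \<and> i \<le> kX \<and> 1 \<le> j \<and> j \<le> kY (S i)}"
          define g where "g = (\<lambda>(i, j). P (i - 1) + j)"
          have lt: False if "i < i'" "(i, j) \<in> I" "(i', j') \<in> I" "P (i - 1) + j = P (i' - 1) + j'" for i j i' j'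
          proof -
            have "P (i - 1) + j \<le> P i" using that PS[of i] by (auto simp: I_def)
            also have "P i \<le> P (i' - 1)" using that by (intro Pmono) auto
            finally show False using that by (auto simp: I_def)
          qed
          have injg: "inj_on g I"
          proof (rule inj_onI)
            fix a b assume a: "a \<in> I" and b: "b \<in> I" and e: "g a = g b"
            obtain i j i' j' where ab: "a = (i, j)" "b = (i', j')" by (cases a, cases b) auto
            show "a = b"
            proof (cases "i = i'")
              case True then show ?thesis using e ab by (simp add: g_def)
            next
              case False
              then have "i < i' \<or> i' < i" by arith
              then show ?thesis using lt[of i i' j j'] lt[of i' i j' j] a b e ab by (auto simp: g_def)
            qed
          qed
          have gI: "g ` I \<subseteq> {1..P kX}"
          proof
            fix n assume "n \<in> g ` I"
            then obtain i j where ij: "(i,j) \<in> I" "n = P (i - 1) + j" by (auto simp: g_def)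
            then have "n \<le> P i" using PS[of i] by (auto simp: I_def)
            also have "P i \<le> P kX" using ij by (intro Pmono) (auto simp: I_def)
            finally show "n \<in> {1..P kX}" using ij by (auto simp: I_def)
          qed
          have "arrowk R (P kX) (metric_tensor XX YY) (metric_tensor XX' YYs)"
          proof (rule arrowk_blocks[OF _ injg gI], rule ballI)
            fix Z assume "Z \<in> metric_tensor XX YY"
            then obtain X Y where XY: "Z = prod_metric X Y" "X \<in> XX" "Y \<in> YY" unfolding metric_tensor_def by blast
            have "\<exists>UX. (\<forall>i\<in>{1..kX}. UX i \<subseteq> XX' \<and> (\<forall>U\<in>UX i. is_subspace U X) \<and> r_disjoint (R' i) X (UX i)) \<and> mspace X \<subseteq> (\<Union>i\<in>{1..kX}. \<Union>U\<in>UX i. mspace U)"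
              using kX XY(2) unfolding arrowk_def by (rule bspec)
            then obtain UX where UX0: "(\<forall>i\<in>{1..kX}. UX i \<subseteq> XX' \<and> (\<forall>U\<in>UX i. is_subspace U X) \<and> r_disjoint (R' i) X (UX i)) \<and>
                mspace X \<subseteq> (\<Union>i\<in>{1..kX}. \<Union>U\<in>UX i. mspace U)" ..
            note UX = conjunct1[OF UX0] conjunct2[OF UX0]
            have "\<forall>i. \<exists>VV. (\<forall>j\<in>{1..kY (S i)}. VV j \<subseteq> YC (S i) \<and> (\<forall>V\<in>VV j. is_subspace V Y) \<and> r_disjoint (S i j) Y (VV j)) \<and> mspace Y \<subseteq> (\<Union>j\<in>{1..kY (S i)}. \<Union>V\<in>VV j. mspace V)"
            proof
              fix i
              have "arrowk (S i) (kY (S i)) YY (YC (S i))" using Ych by blast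
              then show "\<exists>VV. (\<forall>j\<in>{1..kY (S i)}. VV j \<subseteq> YC (S i) \<and> (\<forall>V\<in>VV j. is_subspace V Y) \<and> r_disjoint (S i j) Y (VV j)) \<and> mspace Y \<subseteq> (\<Union>j\<in>{1..kY (S i)}. \<Union>V\<in>VV j. mspace V)"
                using XY(3) unfolding arrowk_def by (rule bspec)
            qed
            then obtain VV where VV0: "\<forall>i. (\<forall>j\<in>{1..kY (S i)}. VV i j \<subseteq> YC (S i) \<and> (\<forall>V\<in>VV i j. is_subspace V Y) \<and> r_disjoint (S i j) Y (VV i j)) \<and> mspace Y \<subseteq> (\<Union>j\<in>{1..kY (S i)}. \<Union>V\<in>VV i j. mspace V)"
              by (rule choice[THEN exE])
            note VV = VV0[THEN spec]
            define F where "F = (\<lambda>(i, j). {prod_metric U V | U V. U \<in> UX i \<and> V \<in> VV i j})"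
            have "\<forall>t\<in>I. F t \<subseteq> metric_tensor XX' YYs \<and> (\<forall>W\<in>F t. is_subspace W Z) \<and> r_disjoint (R (g t)) Z (F t)"
            proof
              fix t assume "t \<in> I"
              then obtain i j where t: "t = (i, j)" "1 \<le> i" "i \<le> kX" "1 \<le> j" "j \<le> kY (S i)" by (auto simp: I_def)
              have UXi: "UX i \<subseteq> XX'" "\<forall>U\<in>UX i. is_subspace U X" "r_disjoint (R' i) X (UX i)" using UX(1) t by auto
              have VVij: "VV i j \<subseteq> YC (S i)" "\<forall>V\<in>VV i j. is_subspace V Y" "r_disjoint (S i j) Y (VV i j)" using VV[of i] t by auto
              have "F t \<subseteq> metric_tensor XX' YYs"
              proof
                fix W assume "W \<in> F t"
                then obtain U V where "W = prod_metric U V" "U \<in> UX i" "V \<in> VV i j" using t unfolding F_def by auto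
                moreover have "YC (S i) \<subseteq> YYs" using t unfolding YYs_def by auto
                ultimately show "W \<in> metric_tensor XX' YYs" using UXi(1) VVij(1) unfolding metric_tensor_def by blast
              qed
              moreover have "\<forall>W\<in>F t. is_subspace W Z"
                using UXi(2) VVij(2) t XY(1) unfolding F_def by (auto intro!: subspace_prod)
              moreover have "r_disjoint (R (g t)) Z (F t)"
                unfolding r_disjoint_def
              proof (intro ballI impI)
                fix W W' p q assume W: "W \<in> F t" and W': "W' \<in> F t" and ne: "W \<noteq> W'" and p: "p \<in> mspace W" and q: "q \<in> mspace W'"
                obtain U V where UV: "W = prod_metric U V" "U \<in> UX i" "V \<in> VV i j" using W t unfolding F_def by auto
                obtain U' V' where UV': "W' = prod_metric U' V'" "U' \<in> UX i" "V' \<in> VV i j" using W' t unfolding F_def by auto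
                obtain x y x' y' where pq: "p = (x, y)" "q = (x', y')" by (cases p, cases q) auto
                have m: "x \<in> mspace U" "y \<in> mspace V" "x' \<in> mspace U'" "y' \<in> mspace V'" using p q pq UV UV' by auto
                have gt: "g t = P (i - 1) + j" using t by (simp add: g_def)
                have dZ: "mdist Z p q = prod_dist (mdist X) (mdist Y) (x, y) (x', y')" using XY(1) pq by simp
                show "mdist Z p q > R (g t)"
                proof (cases "U = U'")
                  case False
                  then have "mdist X x x' > R' i" using UXi(3) UV(2) UV'(2) m unfolding r_disjoint_def by blast
                  moreover have "R (g t) \<le> R' i" using R'ge t gt by simp
                  moreover have "mdist X x x' \<le> mdist Z p q" using dZ by (simp add: prod_dist_def real_sqrt_sum_squares_ge1)
                  ultimately show ?thesis by linarith
                next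
                  case True
                  then have "V \<noteq> V'" using ne UV UV' by auto
                  then have "mdist Y y y' > S i j" using VVij(3) UV(3) UV'(3) m unfolding r_disjoint_def by blast
                  moreover have "S i j = R (g t)" using gt by (simp add: S_def)
                  moreover have "mdist Y y y' \<le> mdist Z p q" using dZ by (simp add: prod_dist_def real_sqrt_sum_squares_ge2)
                  ultimately show ?thesis by linarith
                qed
              qed
              ultimately show "F t \<subseteq> metric_tensor XX' YYs \<and> (\<forall>W\<in>F t. is_subspace W Z) \<and> r_disjoint (R (g t)) Z (F t)" by blast
            qed
            moreover have "mspace Z \<subseteq> (\<Union>t\<in>I. \<Union>W\<in>F t. mspace W)"
            proof
              fix p assume "p \<in> mspace Z"
              then obtain x y where p: "p = (x, y)" "x \<in> mspace X" "y \<in> mspace Y" using XY(1) by auto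
              obtain i U where iU: "i \<in> {1..kX}" "U \<in> UX i" "x \<in> mspace U" using UX(2) p(2) by blast
              obtain j V where jV: "j \<in> {1..kY (S i)}" "V \<in> VV i j" "y \<in> mspace V" using VV[of i] p(3) by blast
              have "(i, j) \<in> I" using iU jV by (auto simp: I_def)
              moreover have "prod_metric U V \<in> F (i, j)" using iU jV by (auto simp: F_def)
              moreover have "p \<in> mspace (prod_metric U V)" using p iU jV by simp
              ultimately show "p \<in> (\<Union>t\<in>I. \<Union>W\<in>F t. mspace W)" by blast
            qed
            ultimately show "\<exists>F. (\<forall>t\<in>I. F t \<subseteq> metric_tensor XX' YYs \<and> (\<forall>U\<in>F t. is_subspace U Z) \<and> r_disjoint (R (g t)) Z (F t))
              \<and> mspace Z \<subseteq> (\<Union>t\<in>I. \<Union>U\<in>F t. mspace U)" by blast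
          qed
          then have "fam_arrow R (metric_tensor XX YY) (metric_tensor XX' YYs)" by (rule arrowk_fam)
          then show "\<exists>\<beta><\<alpha>. \<exists>ZZ. inC \<beta> ZZ \<and> fam_arrow R (metric_tensor XX YY) ZZ"
            using tens gl by blast
        qed
      qed
    qed
  qed
  then show ?thesis using assms by simp
qed

end
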